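(* Let $\alpha=(\alpha_\pi)_{\pi\in\mathcal P}$ and $\beta=(\beta_\pi)_{\pi\in\mathcal P}$ be admissible families of weights. Then $\alpha=\beta$ if and only if $\alpha_\sigma=\beta_\sigma$ for every partition $\sigma\in\mathcal P(\mathbf f)$ with exactly two blocks and $\mathbf f\in\mathcal F^n$, $n\le 4$.
   Context: Fix a finite set $\mathcal F$ of faces. For a word $\mathbf f\in\mathcal F^n$ ($n\ge1$), $[n]_{\mathbf f}$ is $\{1,\dots,n\}$ with faces $\ell\mapsto\mathbf f(\ell)$ (elements are called legs); $\mathcal P(\mathbf f)$ is the set of set partitions of $[n]$, viewed with these faces, and $\mathcal P=\bigcup_{\mathbf f}\mathcal P(\mathbf f)$. A finite totally ordered set $S$ with a face map is identified with $[m]_{|S|}$ through the order-preserving bijection ($|S|$ = word of faces read in order), so partitions of such sets are elements of $\mathcal P$. $1_{\mathbf f}$ is the one-block partition. For blocks $\beta_1\ne\beta_2$ of $\pi$, $\pi_{\beta_1\smile\beta_2}=(\pi\setminus\{\beta_1,\beta_2\})\cup\{\beta_1\cup\beta_2\}$, and $\{\beta_1,\beta_2\}$ is regarded as a partition of the multi-faced set $\beta_1\cup\beta_2$. Reduction: for $\pi\in\mathcal P(\mathbf f)$ let $s\sim t$ ($s\le t$) iff all $r\in[s,t]$ have the same face and lie in the same block; $\pi_{\mathrm{red}}$ is the induced partition of the quotient $[n]/\sim$ (classes are intervals, ordered naturally, with their common face). Mirror: $\overline{\mathbf f}(i)=\mathbf f(n+1-i)$, $\overline\pi=\{\{n+1-i:i\in\beta\}:\beta\in\pi\}\in\mathcal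 P(\overline{\mathbf f})$. A family $\alpha=(\alpha_\pi)_{\pi\in\mathcal P}$ of complex numbers is admissible if: (i) $\alpha_{1_{\mathbf f}}=1$ for all $\mathbf f$; (ii) $\alpha_{\{\{1\},\{2\}\}}=1$ for every $\mathbf f\in\mathcal F^2$; (iii) $\alpha_\pi=\alpha_{\pi_{\mathrm{red}}}$; (iv) if $\pi\in\mathcal P(\mathbf f)$ has blocks $\beta_1\ne\beta_2$ with $i\in\beta_1$, $i+1\in\beta_2$, $\mathbf f(i)=\mathbf f(i+1)$, then $\alpha_\pi=\alpha_{\pi_{\beta_1\smile\beta_2}}\alpha_{\{\beta_1,\beta_2\}}$; (v) $\alpha_\pi=\alpha_\sigma$ whenever $\pi\in\mathcal P(\mathbf f)$, $\sigma\in\mathcal P(\mathbf g)$ have the same underlying set partition of $[n]$ and $\mathbf f(\ell)=\mathbf g(\ell)$ for $1<\ell<n$; (vi) $\alpha_{\overline\pi}=\overline{\alpha_\pi}$. *)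

theory Defs
  imports Complex_Main "HOL-Library.Disjoint_Sets"
begin

text \<open>A word f in F^n is a list of length n; leg l (1 \<le> l \<le> n)
has face f ! (l - 1). A partition in P(f) is a set partition of {1..length f}, n \<ge> 1.
A family of weights is a function on words and set partitions; only its values on P matter.\<close>

definition face :: "'f list \<Rightarrow> nat \<Rightarrow> 'f" where
  "face f l = f ! (l - 1)"

definition inP :: "'f list \<Rightarrow> nat set set \<Rightarrow> bool" where
  "inP f \<pi> \<longleftrightarrow> length f \<ge> 1 \<and> partition_on {1..length f} \<pi>"

text \<open>Identification of a finite totally ordered set S of legs (with faces from f) with
[m]_{|S|} via the order-preserving bijection l \<mapsto> card {x \<in> S. x \<le> l}.\<close>

definition std_word :: "'f list \<Rightarrow> nat set \<Rightarrow> 'f list" where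
  "std_word f S = map (face f) (sorted_list_of_set S)"

definition std_part :: "nat set \<Rightarrow> nat set set \<Rightarrow> nat set set" where
  "std_part S \<rho> = (\<lambda>B. (\<lambda>l. card {x \<in> S. x \<le> l}) ` B) ` \<rho>"

definition merge :: "nat set set \<Rightarrow> nat set \<Rightarrow> nat set \<Rightarrow> nat set set" where
  "merge \<pi> b1 b2 = (\<pi> - {b1, b2}) \<union> {b1 \<union> b2}"

definition same_block :: "nat set set \<Rightarrow> nat \<Rightarrow> nat \<Rightarrow> bool" where
  "same_block \<pi> r s \<longleftrightarrow> (\<exists>B\<in>\<pi>. r \<in> B \<and> s \<in> B)"

definition red_sim :: "'f list \<Rightarrow> nat set set \<Rightarrow> nat \<Rightarrow> nat \<Rightarrow> bool" where
  "red_sim f \<pi> s t \<longleftrightarrow> s \<le> t \<and> (\<forall>r\<in>{s..t}. face f r = face f s \<and> same_block \<pi> r s)"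

text \<open>The equivalence classes are intervals; each class is represented by its least element.
The quotient [n]/\<sim>, ordered naturally with the common faces, is thus identified with the set
of class minima, and the induced partition is the restriction of \<pi> to it.\<close>
definition red_reps :: "'f list \<Rightarrow> nat set set \<Rightarrow> nat set" where
  "red_reps f \<pi> = {t \<in> {1..length f}. \<not> (\<exists>s<t. red_sim f \<pi> s t)}"

definition restrict_part :: "nat set set \<Rightarrow> nat set \<Rightarrow> nat set set" where
  "restrict_part \<pi> S = {B \<inter> S | B. B \<in> \<pi> \<and> B \<inter> S \<noteq> {}}"

definition red_word :: "'f list \<Rightarrow> nat set set \<Rightarrow> 'f list" where
  "red_word f \<pi> = std_word f (red_reps f \<pi>)"

definition red_part :: "'f list \<Rightarrow> nat set set \<Rightarrow> nat set set" where
  "red_part f \<pi> = std_part (red_reps f \<pi>) (restrict_part \<pi> (red_reps f \<pi>))"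

definition mirror_part :: "nat \<Rightarrow> nat set set \<Rightarrow> nat set set" where
  "mirror_part n \<pi> = (\<lambda>B. (\<lambda>i. n + 1 - i) ` B) ` \<pi>"

definition admissible :: "('f::finite list \<Rightarrow> nat set set \<Rightarrow> complex) \<Rightarrow> bool" where
  "admissible \<alpha> \<longleftrightarrow>
     (\<forall>f. length f \<ge> 1 \<longrightarrow> \<alpha> f {{1..length f}} = 1)
   \<and> (\<forall>f. length f = 2 \<longrightarrow> \<alpha> f {{1},{2}} = 1)
   \<and> (\<forall>f \<pi>. inP f \<pi> \<longrightarrow> \<alpha> f \<pi> = \<alpha> (red_word f \<pi>) (red_part f \<pi>))
   \<and> (\<forall>f \<pi> b1 b2 i. inP f \<pi> \<and> b1 \<in> \<pi> \<and> b2 \<in> \<pi> \<and> b1 \<noteq> b2 \<and> i \<in> b1 \<and> Suc i \<in> b2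
        \<and> face f i = face f (Suc i) \<longrightarrow>
        \<alpha> f \<pi> = \<alpha> f (merge \<pi> b1 b2)
                 * \<alpha> (std_word f (b1 \<union> b2)) (std_part (b1 \<union> b2) {b1, b2}))
   \<and> (\<forall>f g \<pi>. inP f \<pi> \<and> length g = length f
        \<and> (\<forall>l. 1 < l \<and> l < length f \<longrightarrow> face f l = face g l) \<longrightarrow> \<alpha> f \<pi> = \<alpha> g \<pi>)
   \<and> (\<forall>f \<pi>. inP f \<pi> \<longrightarrow> \<alpha> (rev f) (mirror_part (length f) \<pi>) = cnj (\<alpha> f \<pi>))"

end

theory Submission
  imports Defs
begin

lemma inP_finite: "inP f \<pi> \<Longrightarrow> finite \<pi>"
  unfolding inP_def by (meson finite_atLeastAtMost finite_elements)

lemma inP_sub: "inP f \<pi> \<Longrightarrow> B \<in> \<pi> \<Longrightarrow> B \<subseteq> {1..length f}"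
  unfolding inP_def partition_on_def by auto

lemma inP_cover: "inP f \<pi> \<Longrightarrow> x \<in> {1..length f} \<Longrightarrow> \<exists>B\<in>\<pi>. x \<in> B"
  unfolding inP_def partition_on_def by auto

lemma inP_disj: "inP f \<pi> \<Longrightarrow> B1 \<in> \<pi> \<Longrightarrow> B2 \<in> \<pi> \<Longrightarrow> x \<in> B1 \<Longrightarrow> x \<in> B2 \<Longrightarrow> B1 = B2"
  unfolding inP_def partition_on_def disjoint_def by blast

lemma inP_ne: "inP f \<pi> \<Longrightarrow> {} \<notin> \<pi>"
  unfolding inP_def partition_on_def by auto

lemma sb_refl: "inP f \<pi> \<Longrightarrow> x \<in> {1..length f} \<Longrightarrow> same_block \<pi> x x"
  unfolding same_block_def using inP_cover by blast

lemma sb_sym: "same_block \<pi> x y \<Longrightarrow> same_block \<pi> y x"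
  unfolding same_block_def by blast

lemma sb_trans: "inP f \<pi> \<Longrightarrow> same_block \<pi> x y \<Longrightarrow> same_block \<pi> y z \<Longrightarrow> same_block \<pi> x z"
  unfolding same_block_def using inP_disj by metis

lemma sb_range: "inP f \<pi> \<Longrightarrow> same_block \<pi> x y \<Longrightarrow> x \<in> {1..length f} \<and> y \<in> {1..length f}"
  unfolding same_block_def using inP_sub by blast

definition adj :: "'f list \<Rightarrow> nat set set \<Rightarrow> nat \<Rightarrow> bool" where
  "adj f \<pi> t \<longleftrightarrow> 2 \<le> t \<and> face f (t-1) = face f t \<and> same_block \<pi> (t-1) t"


lemma red_reps_char:
  assumes "inP f \<pi>"
  shows "red_reps f \<pi> = {t \<in> {1..length f}. \<not> adj f \<pi> t}"
proof -
  have key: "(\<exists>s<t. red_sim f \<pi> s t) \<longleftrightarrow> adj f \<pi> t" if t: "t \<in> {1..length f}" for t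
  proof
    assume "\<exists>s<t. red_sim f \<pi> s t"
    then obtain s where st: "s < t" and rs: "\<forall>r\<in>{s..t}. face f r = face f s \<and> same_block \<pi> r s"
      unfolding red_sim_def by blast
    have "s \<in> {s..t}" using st by simp
    then have "same_block \<pi> s s" using rs by blast
    then have s1: "s \<ge> 1" using sb_range[OF assms] by simp
    have "t - 1 \<in> {s..t}" using st by simp
    then have a: "face f (t-1) = face f s" "same_block \<pi> (t-1) s" using rs by blast+
    have "t \<in> {s..t}" using st by simp
    then have b: "face f t = face f s" "same_block \<pi> t s" using rs by blast+
    have c: "same_block \<pi> (t-1) t" using sb_trans[OF assms a(2) sb_sym[OF b(2)]] .
    have "2 \<le> t" using s1 st by simp
    then show "adj f \<pi> t" unfolding adj_def using a(1) b(1) c by simp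
  next
    assume "adj f \<pi> t"
    then have a: "2 \<le> t" "face f (t-1) = face f t" "same_block \<pi> (t-1) t" unfolding adj_def by auto
    have t1: "t - 1 \<in> {1..length f}" using a(1) t by auto
    have "\<forall>r\<in>{t-1..t}. face f r = face f (t - 1) \<and> same_block \<pi> r (t - 1)"
    proof
      fix r assume "r \<in> {t-1..t}"
      then have "r = t-1 \<or> r = t" by auto
      then show "face f r = face f (t - 1) \<and> same_block \<pi> r (t - 1)"
      proof
        assume "r = t - 1" then show ?thesis using sb_refl[OF assms t1] by simp
      next
        assume "r = t" then show ?thesis using a(2) sb_sym[OF a(3)] by simp
      qed
    qed
    moreover have "t - 1 \<le> t" by simp
    ultimately have "red_sim f \<pi> (t-1) t" unfolding red_sim_def by blast
    moreover have "t - 1 < t" using a(1) by simp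
    ultimately show "\<exists>s<t. red_sim f \<pi> s t" by blast
  qed
  show ?thesis unfolding red_reps_def
  proof (rule Collect_cong)
    fix t show "(t \<in> {1..length f} \<and> \<not> (\<exists>s<t. red_sim f \<pi> s t)) = (t \<in> {1..length f} \<and> \<not> adj f \<pi> t)"
      using key by blast
  qed
qed


lemma adm_D1:
  assumes "admissible \<alpha>"
  shows "(\<forall>f. length f \<ge> 1 \<longrightarrow> \<alpha> f {{1..length f}} = 1)"
  using assms unfolding admissible_def by (elim conjE) assumption

lemma adm_D2:
  assumes "admissible \<alpha>"
  shows "(\<forall>f. length f = 2 \<longrightarrow> \<alpha> f {{1},{2}} = 1)"
  using assms unfolding admissible_def by (elim conjE) assumption

lemma adm_D3:
  assumes "admissible \<alpha>"
  shows "(\<forall>f \<pi>. inP f \<pi> \<longrightarrow> \<alpha> f \<pi> = \<alpha> (red_word f \<pi>) (red_part f \<pi>))"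
  using assms unfolding admissible_def by (elim conjE) assumption

lemma adm_D4:
  assumes "admissible \<alpha>"
  shows "(\<forall>f \<pi> b1 b2 i. inP f \<pi> \<and> b1 \<in> \<pi> \<and> b2 \<in> \<pi> \<and> b1 \<noteq> b2 \<and> i \<in> b1 \<and> Suc i \<in> b2
        \<and> face f i = face f (Suc i) \<longrightarrow>
        \<alpha> f \<pi> = \<alpha> f (merge \<pi> b1 b2)
                 * \<alpha> (std_word f (b1 \<union> b2)) (std_part (b1 \<union> b2) {b1, b2}))"
  using assms unfolding admissible_def by (elim conjE) assumption

lemma adm_D5:
  assumes "admissible \<alpha>"
  shows "(\<forall>f g \<pi>. inP f \<pi> \<and> length g = length f
        \<and> (\<forall>l. 1 < l \<and> l < length f \<longrightarrow> face f l = face g l) \<longrightarrow> \<alpha> f \<pi> = \<alpha> g \<pi>)"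
  using assms unfolding admissible_def by (elim conjE) assumption

lemma adm_one: "admissible \<alpha> \<Longrightarrow> length f \<ge> 1 \<Longrightarrow> \<alpha> f {{1..length f}} = 1"
  using adm_D1 by blast
lemma adm_two: "admissible \<alpha> \<Longrightarrow> length f = 2 \<Longrightarrow> \<alpha> f {{1},{2}} = 1"
  using adm_D2 by blast
lemma adm_red: "admissible \<alpha> \<Longrightarrow> inP f \<pi> \<Longrightarrow> \<alpha> f \<pi> = \<alpha> (red_word f \<pi>) (red_part f \<pi>)"
  using adm_D3 by blast
lemma adm_merge: "admissible \<alpha> \<Longrightarrow> inP f \<pi> \<Longrightarrow> b1 \<in> \<pi> \<Longrightarrow> b2 \<in> \<pi> \<Longrightarrow> b1 \<noteq> b2 \<Longrightarrow> i \<in> b1 \<Longrightarrow> Suc i \<in> b2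
   \<Longrightarrow> face f i = face f (Suc i) \<Longrightarrow>
   \<alpha> f \<pi> = \<alpha> f (merge \<pi> b1 b2) * \<alpha> (std_word f (b1 \<union> b2)) (std_part (b1 \<union> b2) {b1, b2})"
  using adm_D4[of \<alpha>] by blast
lemma adm_v: "admissible \<alpha> \<Longrightarrow> inP f \<pi> \<Longrightarrow> length g = length f \<Longrightarrow>
   (\<And>l. 1 < l \<Longrightarrow> l < length f \<Longrightarrow> face f l = face g l) \<Longrightarrow> \<alpha> f \<pi> = \<alpha> g \<pi>"
  using adm_D5[of \<alpha>] by blast

definition up :: "nat \<Rightarrow> nat \<Rightarrow> nat" where "up p x = (if x \<le> p then x else Suc x)"
definition dn :: "nat \<Rightarrow> nat \<Rightarrow> nat" where "dn p x = (if x \<le> p then x else x - 1)"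
definition rmv :: "'a list \<Rightarrow> nat \<Rightarrow> 'a list" where "rmv h p = take p h @ drop (Suc p) h"
definition colp :: "nat \<Rightarrow> nat set set \<Rightarrow> nat set set" where
  "colp p \<sigma> = (\<lambda>B. dn p ` (B - {Suc p})) ` \<sigma>"

lemma dn_up[simp]: "dn p (up p x) = x"
  unfolding up_def dn_def by auto
lemma up_dn: "x \<noteq> Suc p \<Longrightarrow> up p (dn p x) = x"
  unfolding up_def dn_def by auto
lemma up_ne[simp]: "up p x \<noteq> Suc p"
  unfolding up_def by auto
lemma up_ne2[simp]: "Suc p \<noteq> up p x"
  unfolding up_def by auto
lemma up_less_iff[simp]: "up p x < up p y \<longleftrightarrow> x < y"
  unfolding up_def by auto
lemma up_le_iff[simp]: "up p x \<le> up p y \<longleftrightarrow> x \<le> y"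
  unfolding up_def by auto
lemma up_inj[simp]: "up p x = up p y \<longleftrightarrow> x = y"
  unfolding up_def by auto
lemma inj_up: "inj_on (up p) A"
  by (auto intro: inj_onI)
lemma dn_inj: "x \<noteq> Suc p \<Longrightarrow> y \<noteq> Suc p \<Longrightarrow> dn p x = dn p y \<Longrightarrow> x = y"
  by (metis up_dn)

lemma length_rmv: "p < length h \<Longrightarrow> length (rmv h p) = length h - 1"
  unfolding rmv_def by simp

lemma face_rmv: "p < length h \<Longrightarrow> 1 \<le> x \<Longrightarrow> x \<le> length h - 1 \<Longrightarrow> face (rmv h p) x = face h (up p x)"
  unfolding face_def rmv_def up_def by (auto simp: nth_append min_def)

lemma sb_colp: "same_block (colp p \<sigma>) x y \<longleftrightarrow> same_block \<sigma> (up p x) (up p y)"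
proof
  assume "same_block (colp p \<sigma>) x y"
  then obtain B where B: "B \<in> \<sigma>" "x \<in> dn p ` (B - {Suc p})" "y \<in> dn p ` (B - {Suc p})"
    unfolding same_block_def colp_def by auto
  then obtain b1 b2 where "b1 \<in> B" "b1 \<noteq> Suc p" "x = dn p b1" "b2 \<in> B" "b2 \<noteq> Suc p" "y = dn p b2" by blast
  then have "up p x \<in> B" "up p y \<in> B" using up_dn by auto
  then show "same_block \<sigma> (up p x) (up p y)" unfolding same_block_def using B(1) by blast
next
  assume "same_block \<sigma> (up p x) (up p y)"
  then obtain B where B: "B \<in> \<sigma>" "up p x \<in> B" "up p y \<in> B" unfolding same_block_def by blast
  have "x \<in> dn p ` (B - {Suc p})" using B(2) by (metis Diff_iff dn_up image_eqI singletonD up_ne)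
  moreover have "y \<in> dn p ` (B - {Suc p})" using B(3) by (metis Diff_iff dn_up image_eqI singletonD up_ne)
  ultimately show "same_block (colp p \<sigma>) x y" unfolding same_block_def colp_def using B(1) by blast
qed

lemma colp_props:
  assumes inp: "inP h \<sigma>" and p: "1 \<le> p" "Suc p \<le> length h" and sb: "same_block \<sigma> p (Suc p)"
  shows "inP (rmv h p) (colp p \<sigma>) \<and> card (colp p \<sigma>) = card \<sigma>"
proof -
  let ?N = "length h"
  have len: "length (rmv h p) = ?N - 1" using length_rmv[of p h] p by simp
  have ne: "B - {Suc p} \<noteq> {}" if B: "B \<in> \<sigma>" for B
  proof
    assume e: "B - {Suc p} = {}"
    have "B \<noteq> {}" using inP_ne[OF inp] B by blast
    then have "Suc p \<in> B" using e by blast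
    obtain B' where "B' \<in> \<sigma>" "p \<in> B'" "Suc p \<in> B'" using sb unfolding same_block_def by blast
    then have "B' = B" using inP_disj[OF inp] B \<open>Suc p \<in> B\<close> by blast
    then show False using \<open>p \<in> B'\<close> e by auto
  qed
  have U: "\<Union>\<sigma> = {1..?N}" using inp unfolding inP_def partition_on_def by blast
  have cover: "\<Union>(colp p \<sigma>) = {1..?N - 1}"
  proof
    show "\<Union>(colp p \<sigma>) \<subseteq> {1..?N - 1}"
    proof
      fix x assume "x \<in> \<Union>(colp p \<sigma>)"
      then obtain B y where "B \<in> \<sigma>" "y \<in> B" "y \<noteq> Suc p" "x = dn p y" unfolding colp_def by blast
      then have "y \<in> {1..?N}" using U by blast
      then show "x \<in> {1..?N - 1}" using \<open>y \<noteq> Suc p\<close> \<open>x = dn p y\<close> p unfolding dn_def by auto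
    qed
  next
    show "{1..?N - 1} \<subseteq> \<Union>(colp p \<sigma>)"
    proof
      fix x assume x: "x \<in> {1..?N - 1}"
      then have "up p x \<in> {1..?N}" using p unfolding up_def by auto
      then obtain B where "B \<in> \<sigma>" "up p x \<in> B" using U by blast
      then have "x \<in> dn p ` (B - {Suc p})" by (metis Diff_iff dn_up image_eqI singletonD up_ne)
      then show "x \<in> \<Union>(colp p \<sigma>)" unfolding colp_def using \<open>B \<in> \<sigma>\<close> by blast
    qed
  qed
  have dis: "dn p ` (B1 - {Suc p}) \<inter> dn p ` (B2 - {Suc p}) = {}" if "B1 \<in> \<sigma>" "B2 \<in> \<sigma>" "B1 \<noteq> B2" for B1 B2
  proof -
    have "B1 \<inter> B2 = {}" using inP_disj[OF inp] that by blast
    then show ?thesis using dn_inj by blast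
  qed
  have inj: "inj_on (\<lambda>B. dn p ` (B - {Suc p})) \<sigma>"
  proof (rule inj_onI)
    fix B1 B2 assume a: "B1 \<in> \<sigma>" "B2 \<in> \<sigma>" "dn p ` (B1 - {Suc p}) = dn p ` (B2 - {Suc p})"
    show "B1 = B2"
    proof (rule ccontr)
      assume "B1 \<noteq> B2"
      then have "dn p ` (B1 - {Suc p}) = {}" using dis[OF a(1,2)] a(3) by auto
      then show False using ne[OF a(1)] by blast
    qed
  qed
  have part: "partition_on {1..?N - 1} (colp p \<sigma>)"
  proof (rule partition_onI)
    show "\<Union>(colp p \<sigma>) = {1..?N - 1}" by (rule cover)
  next
    fix C1 C2 assume "C1 \<in> colp p \<sigma>" "C2 \<in> colp p \<sigma>" "C1 \<noteq> C2"
    then show "disjnt C1 C2" unfolding colp_def disjnt_def using dis by auto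
  next
    show "{} \<notin> colp p \<sigma>" unfolding colp_def using ne by auto
  qed
  show ?thesis
  proof
    show "inP (rmv h p) (colp p \<sigma>)" unfolding inP_def using part len p by simp
    show "card (colp p \<sigma>) = card \<sigma>" unfolding colp_def using card_image[OF inj] .
  qed
qed


lemma sorted_up: "finite R \<Longrightarrow> sorted_list_of_set (up p ` R) = map (up p) (sorted_list_of_set R)"
proof -
  assume fin: "finite R"
  have "sorted_wrt (<) (map (up p) (sorted_list_of_set R))"
    by (simp add: sorted_wrt_map strict_sorted_list_of_set)
  moreover have "set (map (up p) (sorted_list_of_set R)) = up p ` R" using fin by simp
  moreover have "length (map (up p) (sorted_list_of_set R)) = card (up p ` R)"
    using fin card_image[OF inj_up[of p R]] by simp
  ultimately show ?thesis using sorted_list_of_set_unique fin by (metis finite_imageI)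
qed

lemma rk_up: "card {y \<in> up p ` R. y \<le> up p x} = card {y\<in>R. y \<le> x}"
proof -
  have "{y \<in> up p ` R. y \<le> up p x} = up p ` {y\<in>R. y \<le> x}" by auto
  then show ?thesis using card_image[OF inj_up] by simp
qed

lemma std_part_up: "std_part (up p ` R) ((`) (up p) ` Q) = std_part R Q"
  unfolding std_part_def image_image using rk_up by (simp add: image_image)

lemma restrict_up: "restrict_part \<sigma> (up p ` R) = (`) (up p) ` restrict_part (colp p \<sigma>) R"
proof -
  have key: "up p ` (dn p ` (B - {Suc p}) \<inter> R) = B \<inter> up p ` R" for B
  proof -
    have "up p ` (dn p ` (B - {Suc p}) \<inter> R) = up p ` (dn p ` (B - {Suc p})) \<inter> up p ` R"
      by (rule image_Int[OF inj_up])
    also have "up p ` (dn p ` (B - {Suc p})) = B - {Suc p}"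
      by (auto simp: image_image up_dn)
    finally show ?thesis by auto
  qed
  have "restrict_part \<sigma> (up p ` R) = (\<lambda>B. B \<inter> up p ` R) ` {B \<in> \<sigma>. B \<inter> up p ` R \<noteq> {}}"
    unfolding restrict_part_def by auto
  also have "\<dots> = (\<lambda>B. up p ` (dn p ` (B - {Suc p}) \<inter> R)) ` {B \<in> \<sigma>. up p ` (dn p ` (B - {Suc p}) \<inter> R) \<noteq> {}}"
    unfolding key ..
  also have "\<dots> = (`) (up p) ` restrict_part (colp p \<sigma>) R"
    unfolding restrict_part_def colp_def by auto
  finally show ?thesis .
qed

lemma adj_rel:
  assumes inp: "inP h \<sigma>" and p: "1 \<le> p" "Suc p \<le> length h"
    and fc: "face h p = face h (Suc p)" and sb: "same_block \<sigma> p (Suc p)"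
    and x: "x \<in> {1..length h - 1}"
  shows "adj (rmv h p) (colp p \<sigma>) x \<longleftrightarrow> adj h \<sigma> (up p x)"
proof -
  have pl: "p < length h" using p by simp
  have fx: "face (rmv h p) x = face h (up p x)" using face_rmv[OF pl] x by simp
  show ?thesis
  proof (cases "x \<le> p")
    case True
    then have ux: "up p x = x" unfolding up_def by simp
    show ?thesis
    proof (cases "2 \<le> x")
      case True
      have fx1: "face (rmv h p) (x-1) = face h (up p (x-1))" using face_rmv[OF pl] x True by simp
      have "up p (x-1) = x - 1" using \<open>x \<le> p\<close> unfolding up_def by simp
      then show ?thesis unfolding adj_def sb_colp using fx fx1 ux by simp
    next
      case False
      then show ?thesis unfolding adj_def using ux by simp
    qed
  next
    case False
    then have ux: "up p x = Suc x" unfolding up_def by simp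
    have x2: "2 \<le> x" using False p by simp
    have fx1: "face (rmv h p) (x-1) = face h (up p (x-1))" using face_rmv[OF pl] x x2 by simp
    show ?thesis
    proof (cases "x = Suc p")
      case True
      have u1: "up p (x-1) = p" using True unfolding up_def by simp
      have r: "adj (rmv h p) (colp p \<sigma>) x \<longleftrightarrow> face h p = face h (Suc (Suc p)) \<and> same_block \<sigma> p (Suc (Suc p))"
        unfolding adj_def sb_colp using fx fx1 u1 ux True x2 by simp
      have l: "adj h \<sigma> (up p x) \<longleftrightarrow> face h (Suc p) = face h (Suc (Suc p)) \<and> same_block \<sigma> (Suc p) (Suc (Suc p))"
        unfolding adj_def using ux True by simp
      have "same_block \<sigma> p (Suc (Suc p)) \<longleftrightarrow> same_block \<sigma> (Suc p) (Suc (Suc p))"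
        using sb_trans[OF inp] sb sb_sym by metis
      then show ?thesis using r l fc by simp
    next
      case False
      then have u1: "up p (x-1) = x" using \<open>\<not> x \<le> p\<close> x2 unfolding up_def by simp
      show ?thesis unfolding adj_def sb_colp using fx fx1 u1 ux x2 by simp
    qed
  qed
qed

lemma reps_rel:
  assumes inp: "inP h \<sigma>" and p: "1 \<le> p" "Suc p \<le> length h"
    and fc: "face h p = face h (Suc p)" and sb: "same_block \<sigma> p (Suc p)"
  shows "red_reps h \<sigma> = up p ` red_reps (rmv h p) (colp p \<sigma>)"
proof -
  have inp2: "inP (rmv h p) (colp p \<sigma>)" using colp_props[OF inp p sb] by blast
  have len: "length (rmv h p) = length h - 1" using length_rmv[of p h] p by simp
  show ?thesis
  proof (rule set_eqI)
    fix t
    show "t \<in> red_reps h \<sigma> \<longleftrightarrow> t \<in> up p ` red_reps (rmv h p) (colp p \<sigma>)"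
    proof (cases "t = Suc p")
      case True
      have "adj h \<sigma> t" unfolding adj_def using True p fc sb by simp
      then show ?thesis unfolding red_reps_char[OF inp] using True by auto
    next
      case False
      then have t: "t = up p (dn p t)" using up_dn by simp
      have "t \<in> up p ` red_reps (rmv h p) (colp p \<sigma>) \<longleftrightarrow> dn p t \<in> red_reps (rmv h p) (colp p \<sigma>)"
        by (subst t) (simp add: inj_image_mem_iff[OF inj_up])
      also have "\<dots> \<longleftrightarrow> dn p t \<in> {1..length h - 1} \<and> \<not> adj h \<sigma> t"
        unfolding red_reps_char[OF inp2] len using adj_rel[OF assms, of "dn p t"] t by auto
      also have "\<dots> \<longleftrightarrow> t \<in> {1..length h} \<and> \<not> adj h \<sigma> t"
        using False p unfolding dn_def by auto
      finally show ?thesis unfolding red_reps_char[OF inp] by simp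
    qed
  qed
qed

lemma removal:
  assumes adm: "admissible \<alpha>" and inp: "inP h \<sigma>" and p: "1 \<le> p" "Suc p \<le> length h"
    and fc: "face h p = face h (Suc p)" and sb: "same_block \<sigma> p (Suc p)"
  shows "\<alpha> h \<sigma> = \<alpha> (rmv h p) (colp p \<sigma>)"
proof -
  let ?h = "rmv h p" and ?s = "colp p \<sigma>"
  have inp2: "inP ?h ?s" using colp_props[OF inp p sb] by blast
  have len: "length ?h = length h - 1" using length_rmv[of p h] p by simp
  have R: "red_reps h \<sigma> = up p ` red_reps ?h ?s" by (rule reps_rel[OF inp p fc sb])
  have fin: "finite (red_reps ?h ?s)" unfolding red_reps_def by simp
  have sub: "red_reps ?h ?s \<subseteq> {1..length h - 1}" unfolding red_reps_def len by auto
  have w: "red_word h \<sigma> = red_word ?h ?s"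
  proof -
    have "red_word h \<sigma> = map (face h) (map (up p) (sorted_list_of_set (red_reps ?h ?s)))"
      unfolding red_word_def std_word_def R sorted_up[OF fin] ..
    also have "\<dots> = map (face ?h) (sorted_list_of_set (red_reps ?h ?s))"
    proof -
      have "\<forall>x\<in>set (sorted_list_of_set (red_reps ?h ?s)). face h (up p x) = face ?h x"
        using sub fin face_rmv[of p h] p by auto
      then show ?thesis by simp
    qed
    finally show ?thesis unfolding red_word_def std_word_def .
  qed
  have pt: "red_part h \<sigma> = red_part ?h ?s"
    unfolding red_part_def R restrict_up std_part_up ..
  show ?thesis using adm_red[OF adm inp] adm_red[OF adm inp2] w pt by simp
qed


lemma inP_len: "length g = length f \<Longrightarrow> inP g \<pi> = inP f \<pi>"
  unfolding inP_def by simp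

lemma drop_first:
  assumes adm: "admissible \<alpha>" and inp: "inP w M" and n: "2 \<le> length w" and sb: "same_block M 1 2"
  shows "\<alpha> w M = \<alpha> (rmv (w[0 := w!1]) 1) (colp 1 M)"
    and "inP (rmv (w[0 := w!1]) 1) (colp 1 M)" "card (colp 1 M) = card M"
    "length (rmv (w[0 := w!1]) 1) = length w - 1"
proof -
  let ?w = "w[0 := w!1]"
  have l: "length ?w = length w" by simp
  have inp': "inP ?w M" using inP_len[OF l] inp by simp
  have "\<alpha> w M = \<alpha> ?w M"
    by (rule adm_v[OF adm inp l]) (auto simp: face_def)
  also have "\<dots> = \<alpha> (rmv ?w 1) (colp 1 M)"
  proof (rule removal[OF adm inp'])
    have w0: "?w!0 = w!1" using n by (cases w) auto
    have w1: "?w!1 = w!1" using n by simp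
    show "face ?w 1 = face ?w (Suc 1)" unfolding face_def using w0 w1 by simp
    show "same_block M 1 (Suc 1)" using sb by (simp add: numeral_2_eq_2)
  qed (use n in auto)
  finally show "\<alpha> w M = \<alpha> (rmv (w[0 := w!1]) 1) (colp 1 M)" .
  show "inP (rmv ?w 1) (colp 1 M)" "card (colp 1 M) = card M"
  proof -
    have sb1: "same_block M 1 (Suc 1)" using sb by (simp add: numeral_2_eq_2)
    have "1 \<le> (1::nat)" "Suc 1 \<le> length ?w" using n by auto
    from colp_props[OF inp' this sb1] show "inP (rmv ?w 1) (colp 1 M)" "card (colp 1 M) = card M" by auto
  qed
  show "length (rmv ?w 1) = length w - 1" using length_rmv[of 1 ?w] n by simp
qed

lemma drop_first_inP:
  assumes inp: "inP w M" and n: "2 \<le> length w" and sb: "same_block M 1 2"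
  shows "inP (rmv (w[0 := w!1]) 1) (colp 1 M)" "length (rmv (w[0 := w!1]) 1) = length w - 1"
proof -
  let ?w = "w[0 := w!1]"
  have l: "length ?w = length w" by simp
  have inp': "inP ?w M" using inP_len[OF l] inp by simp
  have sb1: "same_block M 1 (Suc 1)" using sb by (simp add: numeral_2_eq_2)
  have "1 \<le> (1::nat)" "Suc 1 \<le> length ?w" using n by auto
  from colp_props[OF inp' this sb1] show "inP (rmv ?w 1) (colp 1 M)" by auto
  show "length (rmv ?w 1) = length w - 1" using length_rmv[of 1 ?w] n by simp
qed

lemma drop_last:
  assumes adm: "admissible \<alpha>" and inp: "inP w M" and n: "2 \<le> length w"
    and sb: "same_block M (length w - 1) (length w)"
  shows "\<alpha> w M = \<alpha> (rmv (w[length w - 1 := w!(length w - 2)]) (length w - 1)) (colp (length w - 1) M)"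
    and "inP (rmv (w[length w - 1 := w!(length w - 2)]) (length w - 1)) (colp (length w - 1) M)"
    "card (colp (length w - 1) M) = card M"
    "length (rmv (w[length w - 1 := w!(length w - 2)]) (length w - 1)) = length w - 1"
proof -
  let ?w = "w[length w - 1 := w!(length w - 2)]" and ?p = "length w - 1"
  have l: "length ?w = length w" by simp
  have inp': "inP ?w M" using inP_len[OF l] inp by simp
  have sp: "Suc ?p = length w" using n by simp
  have p: "1 \<le> ?p" "Suc ?p \<le> length ?w" using n by auto
  have sb': "same_block M ?p (Suc ?p)" using sb sp by simp
  have "\<alpha> w M = \<alpha> ?w M"
    by (rule adm_v[OF adm inp l]) (auto simp: face_def)
  also have "\<dots> = \<alpha> (rmv ?w ?p) (colp ?p M)"
  proof (rule removal[OF adm inp' p _ sb'])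
    have a0: "length w - 1 - 1 = length w - 2" by simp
    have a: "face ?w ?p = w!(length w - 2)" unfolding face_def a0 using n by (simp add: nth_list_update)
    have b: "face ?w (Suc ?p) = w!(length w - 2)" unfolding face_def using n by (simp add: nth_list_update numeral_2_eq_2)
    show "face ?w ?p = face ?w (Suc ?p)" using a b by simp
  qed
  finally show "\<alpha> w M = \<alpha> (rmv ?w ?p) (colp ?p M)" .
  show "inP (rmv ?w ?p) (colp ?p M)" "card (colp ?p M) = card M"
    using colp_props[OF inp' p sb'] by auto
  show "length (rmv ?w ?p) = length w - 1" using length_rmv[of ?p ?w] n by simp
qed

definition rk :: "nat set \<Rightarrow> nat \<Rightarrow> nat" where "rk S l = card {x \<in> S. x \<le> l}"

lemma rk_less: "finite S \<Longrightarrow> y \<in> S \<Longrightarrow> x < y \<Longrightarrow> rk S x < rk S y"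
proof -
  assume a: "finite S" "y \<in> S" "x < y"
  have "y \<in> {z \<in> S. z \<le> y}" "y \<notin> {z \<in> S. z \<le> x}" using a by auto
  moreover have "{z \<in> S. z \<le> x} \<subseteq> {z \<in> S. z \<le> y}" using a by auto
  ultimately have "{z \<in> S. z \<le> x} \<subset> {z \<in> S. z \<le> y}" by blast
  then show ?thesis unfolding rk_def using a(1) by (simp add: psubset_card_mono)
qed

lemma rk_inj: "finite S \<Longrightarrow> inj_on (rk S) S"
  by (rule inj_onI) (metis linorder_neqE_nat less_irrefl rk_less)

lemma rk_range: "finite S \<Longrightarrow> x \<in> S \<Longrightarrow> rk S x \<in> {1..card S}"
proof -
  assume "finite S" "x \<in> S"
  then have "{x} \<subseteq> {y \<in> S. y \<le> x}" "{y \<in> S. y \<le> x} \<subseteq> S" by auto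
  then show ?thesis unfolding rk_def using \<open>finite S\<close>
    by (metis (no_types, lifting) atLeastAtMost_iff card.insert card_mono empty_iff finite.emptyI finite_subset insert_subset card.empty One_nat_def)
qed

lemma rk_image: "finite S \<Longrightarrow> rk S ` S = {1..card S}"
proof -
  assume f: "finite S"
  have "rk S ` S \<subseteq> {1..card S}" using rk_range[OF f] by auto
  moreover have "card (rk S ` S) = card {1..card S}" using card_image[OF rk_inj[OF f]] by simp
  ultimately show ?thesis by (simp add: card_subset_eq)
qed

lemma std_part_rk: "std_part S \<rho> = (`) (rk S) ` \<rho>"
  unfolding std_part_def rk_def by simp

lemma std_props:
  assumes S: "S \<subseteq> {1..n}" "S \<noteq> {}" and part: "partition_on S \<rho>"
  shows "inP (std_word f S) (std_part S \<rho>)" "length (std_word f S) = card S"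
    "card (std_part S \<rho>) = card \<rho>"
proof -
  have fin: "finite S" using S finite_subset by blast
  show len: "length (std_word f S) = card S" unfolding std_word_def by simp
  have cS: "card S \<ge> 1" using fin S(2) by (simp add: Suc_leI card_gt_0_iff)
  have "partition_on (rk S ` S) ((`) (rk S) ` \<rho> - {{}})"
    by (rule partition_on_inj_image[OF part rk_inj[OF fin]])
  moreover have "(`) (rk S) ` \<rho> - {{}} = (`) (rk S) ` \<rho>"
    using partition_onD3[OF part] by auto
  ultimately have "partition_on {1..card S} (std_part S \<rho>)"
    unfolding std_part_rk rk_image[OF fin] by simp
  then show "inP (std_word f S) (std_part S \<rho>)" unfolding inP_def len using cS by simp
  have "\<rho> \<subseteq> Pow S" using partition_onD1[OF part] by auto
  then have "inj_on ((`) (rk S)) \<rho>" using inj_on_image_Pow[OF rk_inj[OF fin]] inj_on_subset by blast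
  then show "card (std_part S \<rho>) = card \<rho>" unfolding std_part_rk by (rule card_image)
qed

lemma pair_partition:
  assumes inp: "inP f \<pi>" and b: "b1 \<in> \<pi>" "b2 \<in> \<pi>" "b1 \<noteq> b2"
  shows "partition_on (b1 \<union> b2) {b1, b2}" "b1 \<union> b2 \<subseteq> {1..length f}" "b1 \<union> b2 \<noteq> {}"
proof -
  have ne: "b1 \<noteq> {}" "b2 \<noteq> {}" using inP_ne[OF inp] b by auto
  have d: "b1 \<inter> b2 = {}" using inP_disj[OF inp] b by blast
  show "partition_on (b1 \<union> b2) {b1, b2}"
    by (rule partition_onI) (use ne d in \<open>auto simp: disjnt_def\<close>)
  show "b1 \<union> b2 \<subseteq> {1..length f}" using inP_sub[OF inp] b by auto
  show "b1 \<union> b2 \<noteq> {}" using ne by auto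
qed

lemma pair_props:
  assumes inp: "inP f \<pi>" and b: "b1 \<in> \<pi>" "b2 \<in> \<pi>" "b1 \<noteq> b2"
  shows "inP (std_word f (b1 \<union> b2)) (std_part (b1 \<union> b2) {b1, b2})"
    "length (std_word f (b1 \<union> b2)) = card (b1 \<union> b2)"
    "card (std_part (b1 \<union> b2) {b1, b2}) = 2"
proof -
  note sp = std_props[OF pair_partition(2,3)[OF assms] pair_partition(1)[OF assms]]
  show "inP (std_word f (b1 \<union> b2)) (std_part (b1 \<union> b2) {b1, b2})" by (rule sp(1))
  show "length (std_word f (b1 \<union> b2)) = card (b1 \<union> b2)" by (rule sp(2))
  show "card (std_part (b1 \<union> b2) {b1, b2}) = 2" using sp(3) b(3) by simp
qed

lemma merge_props:
  assumes inp: "inP f \<pi>" and b: "b1 \<in> \<pi>" "b2 \<in> \<pi>" "b1 \<noteq> b2"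
  shows "inP f (merge \<pi> b1 b2)" "card (merge \<pi> b1 b2) = card \<pi> - 1"
proof -
  have ne: "b1 \<noteq> {}" "b2 \<noteq> {}" using inP_ne[OF inp] b by auto
  have P: "partition_on {1..length f} \<pi>" using inp unfolding inP_def by simp
  have U: "\<Union>\<pi> = {1..length f}" using P unfolding partition_on_def by simp
  have nin: "b1 \<union> b2 \<notin> \<pi> - {b1, b2}"
  proof
    assume "b1 \<union> b2 \<in> \<pi> - {b1, b2}"
    then obtain B where B: "B \<in> \<pi>" "B \<noteq> b1" "B = b1 \<union> b2" by blast
    obtain x where "x \<in> b1" using ne by blast
    then show False using inP_disj[OF inp B(1) b(1)] B by blast
  qed
  have "partition_on {1..length f} (merge \<pi> b1 b2)"
  proof (rule partition_onI)
    show "\<Union>(merge \<pi> b1 b2) = {1..length f}" unfolding merge_def using U b by blast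
  next
    fix p q assume pq: "p \<in> merge \<pi> b1 b2" "q \<in> merge \<pi> b1 b2" "p \<noteq> q"
    have dj: "B1 \<in> \<pi> \<Longrightarrow> B2 \<in> \<pi> \<Longrightarrow> B1 \<noteq> B2 \<Longrightarrow> B1 \<inter> B2 = {}" for B1 B2
      using inP_disj[OF inp] by blast
    show "disjnt p q" using pq unfolding merge_def disjnt_def
      using dj b by (auto; blast)
  next
    show "{} \<notin> merge \<pi> b1 b2" unfolding merge_def using inP_ne[OF inp] ne by auto
  qed
  then show "inP f (merge \<pi> b1 b2)" using inp unfolding inP_def by simp
  have fin: "finite \<pi>" using inP_finite[OF inp] .
  have "card (merge \<pi> b1 b2) = Suc (card (\<pi> - {b1, b2}))"
    unfolding merge_def using nin fin by simp
  also have "card (\<pi> - {b1, b2}) = card \<pi> - 2" using fin b by (simp add: card_Diff_subset)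
  also have "card \<pi> \<ge> 2" using fin b by (metis card_2_iff card_mono empty_subsetI insert_subset)
  then have "Suc (card \<pi> - 2) = card \<pi> - 1" by simp
  finally show "card (merge \<pi> b1 b2) = card \<pi> - 1" by simp
qed


lemma dn_less: "x < y \<Longrightarrow> x \<noteq> Suc p \<Longrightarrow> y \<noteq> Suc p \<Longrightarrow> dn p x < dn p y"
  unfolding dn_def by auto

lemma colp_pair: "colp p {P, Q} = {dn p ` (P - {Suc p}), dn p ` (Q - {Suc p})}"
  unfolding colp_def by simp

lemma colp_pair_ord:
  assumes "\<forall>x\<in>P. \<forall>y\<in>Q. x < y"
  shows "\<forall>x\<in>dn p ` (P - {Suc p}). \<forall>y\<in>dn p ` (Q - {Suc p}). x < y"
  using assms dn_less by blast

lemma card2_neq: "card {A, B} = 2 \<Longrightarrow> A \<noteq> B"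
  by auto

lemma prefix_suffix:
  assumes adm: "admissible \<alpha>"
  shows "inP w {P, Q} \<Longrightarrow> P \<noteq> Q \<Longrightarrow> (\<forall>x\<in>P. \<forall>y\<in>Q. x < y) \<Longrightarrow> \<alpha> w {P, Q} = 1"
proof (induction "length w" arbitrary: w P Q rule: less_induct)
  case less
  let ?n = "length w"
  have inp: "inP w {P, Q}" by fact
  have neP: "P \<noteq> {}" and neQ: "Q \<noteq> {}" using inP_ne[OF inp] by auto
  have U: "P \<union> Q = {1..?n}" using inp unfolding inP_def partition_on_def by auto
  have D: "P \<inter> Q = {}" using inP_disj[OF inp, of P Q] less.prems(2) by auto
  have ord: "\<forall>x\<in>P. \<forall>y\<in>Q. x < y" by fact
  obtain x y where xy: "x \<in> P" "y \<in> Q" using neP neQ by blast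
  have "x < y" using ord xy by blast
  moreover have "x \<ge> 1" "y \<le> ?n" using U xy by auto
  ultimately have n2: "?n \<ge> 2" by simp
  have P1: "1 \<in> P"
  proof -
    have "1 \<in> P \<union> Q" using U n2 by auto
    moreover have "1 \<notin> Q" using ord xy \<open>x \<ge> 1\<close> by fastforce
    ultimately show ?thesis by blast
  qed
  have Qn: "?n \<in> Q"
  proof -
    have "?n \<in> P \<union> Q" using U n2 by auto
    moreover have "?n \<notin> P" using ord xy \<open>y \<le> ?n\<close> by fastforce
    ultimately show ?thesis by blast
  qed
  show ?case
  proof (cases "?n = 2")
    case True
    have A: "x = 1" if "x \<in> P" for x
    proof -
      have "1 \<le> x" "x \<le> 2" using U True that by auto
      moreover have "x \<noteq> 2" using Qn True D that by auto
      ultimately show ?thesis by arith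
    qed
    have B: "x = 2" if "x \<in> Q" for x
    proof -
      have "1 \<le> x" "x \<le> 2" using U True that by auto
      moreover have "x \<noteq> 1" using P1 D that by auto
      ultimately show ?thesis by arith
    qed
    have "P = {1}" using A P1 by blast
    moreover have "2 \<in> Q" using Qn True by simp
    then have "Q = {2}" using B by blast
    ultimately show ?thesis using adm_two[OF adm True] by simp
  next
    case False
    then have n3: "?n \<ge> 3" using n2 by simp
    show ?thesis
    proof (cases "2 \<in> P")
      case True
      have sb: "same_block {P, Q} 1 2" unfolding same_block_def using P1 True by blast
      note df = drop_first[OF adm inp n2 sb]
      let ?w = "rmv (w[0 := w!1]) 1"
      have "\<alpha> ?w (colp 1 {P, Q}) = 1"
        unfolding colp_pair
      proof (rule less.hyps)
        show "length ?w < ?n" using df(4) n2 by simp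
        show "inP ?w {dn 1 ` (P - {Suc 1}), dn 1 ` (Q - {Suc 1})}" using df(2) colp_pair by metis
        show "dn 1 ` (P - {Suc 1}) \<noteq> dn 1 ` (Q - {Suc 1})"
        proof -
          have "card {P, Q} = 2" using less.prems(2) by simp
          then have "card {dn 1 ` (P - {Suc 1}), dn 1 ` (Q - {Suc 1})} = 2" using df(3) colp_pair by metis
          then show ?thesis by (rule card2_neq)
        qed
        show "\<forall>x\<in>dn 1 ` (P - {Suc 1}). \<forall>y\<in>dn 1 ` (Q - {Suc 1}). x < y"
          by (rule colp_pair_ord[OF ord])
      qed
      then show ?thesis using df(1) by simp
    next
      case False
      have "2 \<in> Q" using U False n2 by auto
      have "?n - 1 \<in> P \<union> Q" using U n2 by auto
      moreover have "?n - 1 \<notin> P" using ord \<open>2 \<in> Q\<close> n3 by fastforce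
      ultimately have "?n - 1 \<in> Q" by blast
      then have sb: "same_block {P, Q} (?n - 1) ?n" unfolding same_block_def using Qn by blast
      note dl = drop_last[OF adm inp n2 sb]
      let ?w = "rmv (w[?n - 1 := w!(?n - 2)]) (?n - 1)"
      let ?p = "?n - 1"
      have "\<alpha> ?w (colp ?p {P, Q}) = 1"
        unfolding colp_pair
      proof (rule less.hyps)
        show "length ?w < ?n" using dl(4) n2 by simp
        show "inP ?w {dn ?p ` (P - {Suc ?p}), dn ?p ` (Q - {Suc ?p})}" using dl(2) colp_pair by metis
        show "dn ?p ` (P - {Suc ?p}) \<noteq> dn ?p ` (Q - {Suc ?p})"
        proof -
          have "card {P, Q} = 2" using less.prems(2) by simp
          then have "card {dn ?p ` (P - {Suc ?p}), dn ?p ` (Q - {Suc ?p})} = 2" using dl(3) colp_pair by metis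
          then show ?thesis by (rule card2_neq)
        qed
        show "\<forall>x\<in>dn ?p ` (P - {Suc ?p}). \<forall>y\<in>dn ?p ` (Q - {Suc ?p}). x < y"
          by (rule colp_pair_ord[OF ord])
      qed
      then show ?thesis using dl(1) by simp
    qed
  qed
qed


lemma up_disj: "A \<inter> B = {} \<Longrightarrow> up p ` A \<inter> up p ` B = {}"
  by (metis image_Int inj_up image_empty)

lemma merge_pair_eq: "merge \<pi> b1 b2 = merge \<pi> b2 b1"
  unfolding merge_def by (simp add: insert_commute Un_commute)

lemma partition3:
  assumes "A \<union> B \<union> C = S" "A \<inter> B = {}" "A \<inter> C = {}" "B \<inter> C = {}" "A \<noteq> {}" "B \<noteq> {}" "C \<noteq> {}"
  shows "partition_on S {A, B, C}" "A \<noteq> B" "A \<noteq> C" "B \<noteq> C"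
proof -
  show "A \<noteq> B" using assms(2,5) by blast
  show "A \<noteq> C" using assms(3,5) by blast
  show "B \<noteq> C" using assms(4,6) by blast
  show "partition_on S {A, B, C}"
  proof (rule partition_onI)
    show "\<Union>{A, B, C} = S" using assms(1) by blast
  next
    fix p q assume "p \<in> {A, B, C}" "q \<in> {A, B, C}" "p \<noteq> q"
    then show "disjnt p q" unfolding disjnt_def using assms(2-4) by blast
  next
    show "{} \<notin> {A, B, C}" using assms(5-7) by blast
  qed
qed

lemma up_small: "x \<le> p \<Longrightarrow> up p x = x"
  unfolding up_def by simp

lemma four_notin: "(4::nat) \<notin> up 3 ` X"
proof -
  have "Suc 3 \<notin> up 3 ` X" using up_ne2[of 3] by blast
  then show ?thesis by (simp add: eval_nat_numeral)
qed

lemma up_interval: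
  assumes "1 \<le> p" "p < n"
  shows "up p ` {1..n} \<union> {Suc p} = {1..Suc n}"
proof
  show "up p ` {1..n} \<union> {Suc p} \<subseteq> {1..Suc n}" using assms unfolding up_def by auto
next
  show "{1..Suc n} \<subseteq> up p ` {1..n} \<union> {Suc p}"
  proof
    fix x assume x: "x \<in> {1..Suc n}"
    show "x \<in> up p ` {1..n} \<union> {Suc p}"
    proof (cases "x = Suc p")
      case False
      then have "up p (dn p x) = x" by (rule up_dn)
      moreover have "dn p x \<in> {1..n}" using x False assms unfolding dn_def by auto
      ultimately show ?thesis by (metis UnI1 imageI)
    qed simp
  qed
qed

lemma three_part:
  assumes P: "partition_on {1..n} {W, Z}" and WZ: "W \<noteq> Z" and z3: "3 \<in> Z" and z4: "z \<in> Z" "3 < z"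
  shows "partition_on {1..Suc n} {up 3 ` W, Z \<inter> {..3}, insert 4 (up 3 ` (Z \<inter> {4..}))}"
    "up 3 ` W \<noteq> Z \<inter> {..3}" "up 3 ` W \<noteq> insert 4 (up 3 ` (Z \<inter> {4..}))"
    "Z \<inter> {..3} \<noteq> insert 4 (up 3 ` (Z \<inter> {4..}))"
    "(Z \<inter> {..3}) \<union> insert 4 (up 3 ` (Z \<inter> {4..})) - {4} = up 3 ` Z"
    "4 \<le> n"
proof -
  define A where "A = up 3 ` W"
  define B where "B = Z \<inter> {..3}"
  define C' where "C' = up 3 ` (Z \<inter> {4..})"
  have U: "W \<union> Z = {1..n}" using P unfolding partition_on_def by simp
  have D: "W \<inter> Z = {}" using P WZ unfolding partition_on_def disjoint_def by auto
  have neW: "W \<noteq> {}" using P unfolding partition_on_def by auto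
  have "z \<in> {1..n}" using U z4 by blast
  then show n4: "4 \<le> n" using z4 by simp
  have Bup: "up 3 ` B = B"
  proof -
    have "up 3 ` B = (\<lambda>x. x) ` B"
      by (rule image_cong) (auto simp: B_def up_small)
    then show ?thesis by simp
  qed
  have Zsplit: "Z = (Z \<inter> {..3}) \<union> (Z \<inter> {4..})" by auto
  have upZ: "up 3 ` Z = B \<union> C'"
  proof -
    have "up 3 ` Z = up 3 ` (Z \<inter> {..3}) \<union> up 3 ` (Z \<inter> {4..})"
      by (subst Zsplit) (rule image_Un)
    then show ?thesis using Bup unfolding B_def C'_def by simp
  qed
  have cov: "A \<union> B \<union> insert 4 C' = {1..Suc n}"
  proof -
    have "A \<union> B \<union> insert 4 C' = up 3 ` (W \<union> Z) \<union> {Suc 3}"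
      unfolding A_def image_Un upZ by auto
    also have "\<dots> = {1..Suc n}" unfolding U by (rule up_interval) (use n4 in auto)
    finally show ?thesis .
  qed
  have B3: "x \<in> B \<Longrightarrow> x \<le> 3" for x unfolding B_def by simp
  have fB: "4 \<notin> B" using B3 by force
  have fA: "4 \<notin> A" unfolding A_def by (rule four_notin)
  have fC: "4 \<notin> C'" unfolding C'_def by (rule four_notin)
  have dAB: "A \<inter> B = {}"
  proof -
    have "up 3 ` W \<inter> up 3 ` (Z \<inter> {..3}) = {}" by (rule up_disj) (simp add: Int_assoc[symmetric] D)
    then show ?thesis using Bup unfolding A_def B_def by simp
  qed
  have dAC: "A \<inter> insert 4 C' = {}"
  proof -
    have "up 3 ` W \<inter> up 3 ` (Z \<inter> {4..}) = {}" by (rule up_disj) (simp add: Int_assoc[symmetric] D)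
    then show ?thesis using fA unfolding A_def C'_def by (simp add: Int_insert_right)
  qed
  have dBC: "B \<inter> insert 4 C' = {}"
  proof -
    have "up 3 ` (Z \<inter> {..3}) \<inter> up 3 ` (Z \<inter> {4..}) = {}" by (rule up_disj) auto
    then have "B \<inter> C' = {}" using Bup unfolding B_def C'_def by simp
    then show ?thesis using fB by (simp add: Int_insert_right)
  qed
  have neA: "A \<noteq> {}" using neW unfolding A_def by simp
  have neB: "B \<noteq> {}" using z3 unfolding B_def by auto
  note r = partition3[OF cov dAB dAC dBC neA neB insert_not_empty]
  show "partition_on {1..Suc n} {up 3 ` W, Z \<inter> {..3}, insert 4 (up 3 ` (Z \<inter> {4..}))}"
    "up 3 ` W \<noteq> Z \<inter> {..3}" "up 3 ` W \<noteq> insert 4 (up 3 ` (Z \<inter> {4..}))"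
    "Z \<inter> {..3} \<noteq> insert 4 (up 3 ` (Z \<inter> {4..}))"
    using r unfolding A_def B_def C'_def by simp_all
  show "(Z \<inter> {..3}) \<union> insert 4 (up 3 ` (Z \<inter> {4..})) - {4} = up 3 ` Z"
    using upZ fB fC unfolding B_def C'_def by blast
qed


lemma two_step:
  assumes inp: "inP f {W, Z}" and WZ: "W \<noteq> Z" and z3: "3 \<in> Z" and z4: "z \<in> Z" "3 < z"
    and o12: "(1 \<in> W \<and> 2 \<in> Z) \<or> (1 \<in> Z \<and> 2 \<in> W)"
  shows "\<exists>w1 M1 w2 M2. inP w1 M1 \<and> length w1 < length f \<and> inP w2 M2 \<and> length w2 < length f \<and>
           (\<forall>\<alpha>. admissible \<alpha> \<longrightarrow> \<alpha> f {W, Z} = \<alpha> w1 M1 * \<alpha> w2 M2)"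
proof -
  let ?n = "length f"
  have P: "partition_on {1..?n} {W, Z}" using inp unfolding inP_def by simp
  note tp = three_part[OF P WZ z3 z4]
  have n4: "4 \<le> ?n" by (rule tp(6))
  define g where "g = f[0 := f!1]"
  define h where "h = take 3 g @ [g!2] @ drop 3 g"
  define A where "A = up 3 ` W"
  define B where "B = Z \<inter> {..3}"
  define C where "C = insert 4 (up 3 ` (Z \<inter> {4..}))"
  define \<rho> where "\<rho> = {A, B, C}"
  define \<sigma> where "\<sigma> = merge \<rho> B C"
  define M where "M = merge \<rho> A B"
  define h1 where "h1 = rmv (h[0 := h!1]) 1"
  define M1 where "M1 = colp 1 M"
  define h2 where "h2 = rmv (h1[0 := h1!1]) 1"
  define M2 where "M2 = colp 1 M1"
  define w3 where "w3 = std_word h (A \<union> B)"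
  define P3 where "P3 = std_part (A \<union> B) {A, B}"
  have lg: "length g = ?n" unfolding g_def by simp
  have lh: "length h = Suc ?n" unfolding h_def using lg n4 by simp
  have inpg: "inP g {W, Z}" using inP_len[OF lg] inp by simp
  have inph: "inP h \<rho>" unfolding inP_def lh \<rho>_def A_def B_def C_def using tp(1) by simp
  have AB: "A \<noteq> B" and AC: "A \<noteq> C" and BC: "B \<noteq> C" unfolding A_def B_def C_def using tp(2-4) by auto
  have Ar: "A \<in> \<rho>" and Br: "B \<in> \<rho>" and Cr: "C \<in> \<rho>" unfolding \<rho>_def by auto
  have finB: "finite B" using inP_sub[OF inph Br] finite_subset by blast
  have finC: "finite C" using inP_sub[OF inph Cr] finite_subset by blast
  have h2e: "h!2 = g!2" unfolding h_def using lg n4 by (simp add: nth_append)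
  have h3e: "h!3 = g!2" unfolding h_def using lg n4 by (simp add: nth_append)
  have g0: "g!0 = f!1" unfolding g_def using n4 by (cases f) auto
  have h0e: "h!0 = f!1" unfolding h_def using n4 lg g0 by (simp add: nth_append)
  have h1e: "h!1 = f!1" unfolding h_def g_def using n4 by (simp add: nth_append)
  have f34: "face h 3 = face h (Suc 3)" unfolding face_def using h2e h3e by simp
  have f12: "face h 1 = face h (Suc 1)" unfolding face_def using h0e h1e by simp
  have rmvh: "rmv h 3 = g" unfolding rmv_def h_def using lg n4 by simp
  have sig: "\<sigma> = {A, B \<union> C}" unfolding \<sigma>_def merge_def \<rho>_def using AB AC BC by auto
  have colsig: "colp 3 \<sigma> = {W, Z}"
  proof -
    have a: "dn 3 ` (A - {Suc 3}) = W"
    proof -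
      have "A - {Suc 3} = A" using four_notin[of W] unfolding A_def by (simp add: eval_nat_numeral)
      then show ?thesis unfolding A_def by (simp add: image_image)
    qed
    have b: "dn 3 ` (B \<union> C - {Suc 3}) = Z"
    proof -
      have "B \<union> C - {Suc 3} = up 3 ` Z" using tp(5) unfolding B_def C_def by (simp add: eval_nat_numeral)
      then show ?thesis by (simp add: image_image)
    qed
    show ?thesis unfolding sig colp_def using a b by simp
  qed
  have inps: "inP h \<sigma>" unfolding \<sigma>_def using merge_props(1)[OF inph Br Cr BC] .
  have b3: "3 \<in> B" unfolding B_def using z3 by simp
  have c4: "Suc 3 \<in> C" unfolding C_def by simp
  have sb34: "same_block \<sigma> 3 (Suc 3)"
  proof -
    note b3
    moreover note c4
    ultimately have "3 \<in> B \<union> C \<and> Suc 3 \<in> B \<union> C" by simp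
    moreover have "B \<union> C \<in> \<sigma>" unfolding sig by simp
    ultimately show ?thesis unfolding same_block_def by (rule rev_bexI[rotated])
  qed
  have p3: "1 \<le> (3::nat)" "Suc 3 \<le> length h" using lh n4 by auto
  have ps: "admissible \<alpha> \<Longrightarrow> \<alpha> (std_word h (B \<union> C)) (std_part (B \<union> C) {B, C}) = 1" for \<alpha>
  proof -
    assume adm: "admissible \<alpha>"
    note pp = pair_props[OF inph Br Cr BC]
    let ?S = "B \<union> C"
    have fin: "finite ?S" using finB finC by simp
    have e: "std_part ?S {B, C} = {rk ?S ` B, rk ?S ` C}" unfolding std_part_rk by simp
    show ?thesis unfolding e
    proof (rule prefix_suffix[OF adm])
      show "inP (std_word h ?S) {rk ?S ` B, rk ?S ` C}" using pp(1) e by simp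
      show "rk ?S ` B \<noteq> rk ?S ` C" using pp(3) e by (metis card2_neq)
      show "\<forall>x\<in>rk ?S ` B. \<forall>y\<in>rk ?S ` C. x < y"
      proof (intro ballI)
        fix x y assume xy: "x \<in> rk ?S ` B" "y \<in> rk ?S ` C"
        obtain a where a: "a \<in> B" "x = rk ?S a" using xy(1) by (rule imageE) simp
        obtain b where b: "b \<in> C" "y = rk ?S b" using xy(2) by (rule imageE) simp
        have ab: "a \<in> B" "b \<in> C" "x = rk ?S a" "y = rk ?S b" using a b by auto
        have "a \<le> 3" using ab(1) unfolding B_def by simp
        moreover have "b \<ge> 4" using ab(2) unfolding C_def up_def by auto
        ultimately have "a < b" by simp
        then show "x < y" using rk_less[OF fin, of b a] ab by simp
      qed
    qed
  qed
  have mg1: "admissible \<alpha> \<Longrightarrow> \<alpha> h \<rho> = \<alpha> h M * \<alpha> w3 P3" for \<alpha>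
  proof -
    assume adm: "admissible \<alpha>"
    have u1: "up 3 1 = 1" "up 3 2 = 2" unfolding up_def by auto
    from o12 show ?thesis
    proof
      assume a: "1 \<in> W \<and> 2 \<in> Z"
      have "1 \<in> A" unfolding A_def using a u1 by (metis imageI)
      moreover have "2 \<in> B" unfolding B_def using a by simp
      then have "Suc 1 \<in> B" by (simp add: numeral_2_eq_2)
      ultimately show ?thesis unfolding M_def w3_def P3_def
        using adm_merge[OF adm inph Ar Br AB _ _ f12] by simp
    next
      assume a: "1 \<in> Z \<and> 2 \<in> W"
      have "2 \<in> A" unfolding A_def using a u1 by (metis imageI)
      then have "Suc 1 \<in> A" by (simp add: numeral_2_eq_2)
      moreover have "1 \<in> B" unfolding B_def using a by simp
      ultimately have "\<alpha> h \<rho> = \<alpha> h (merge \<rho> B A) * \<alpha> (std_word h (B \<union> A)) (std_part (B \<union> A) {B, A})"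
        using adm_merge[OF adm inph Br Ar AB[symmetric] _ _ f12] by simp
      then show ?thesis unfolding M_def w3_def P3_def
        by (simp add: merge_pair_eq[of \<rho> B A] Un_commute insert_commute)
    qed
  qed
  have inpM: "inP h M" unfolding M_def using merge_props(1)[OF inph Ar Br AB] .
  have ABM: "A \<union> B \<in> M" unfolding M_def merge_def by simp
  have in123: "1 \<in> A \<union> B" "2 \<in> A \<union> B" "3 \<in> A \<union> B"
  proof -
    have a: "x \<in> A \<union> B" if x: "x \<in> W \<union> Z" "x \<le> 3" for x
    proof (cases "x \<in> W")
      case True
      then have "up 3 x \<in> A" unfolding A_def by (rule imageI)
      then show ?thesis using up_small[OF x(2)] by simp
    next
      case False
      then have "x \<in> Z" using x(1) by simp
      then have "x \<in> B" unfolding B_def using x(2) by simp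
      then show ?thesis by simp
    qed
    have U: "W \<union> Z = {1..?n}" using P unfolding partition_on_def by simp
    show "1 \<in> A \<union> B" using a[of 1] U n4 by simp
    show "2 \<in> A \<union> B" using a[of 2] U n4 by simp
    show "3 \<in> A \<union> B" using a[of 3] U n4 by simp
  qed
  have sbM: "same_block M 1 2" unfolding same_block_def by (rule bexI[OF _ ABM]) (use in123 in simp)
  have lh2: "2 \<le> length h" using lh n4 by simp
  note d1 = drop_first[OF _ inpM lh2 sbM]
  note d1' = drop_first_inP[OF inpM lh2 sbM]
  have inpM1: "inP h1 M1" unfolding h1_def M1_def by (rule d1'(1))
  have lh1: "length h1 = ?n" unfolding h1_def using d1'(2) lh by simp
  have sbM1: "same_block M1 1 2"
  proof -
    have "up 1 1 = 1" "up 1 2 = 3" unfolding up_def by auto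
    moreover have "same_block M 1 3" unfolding same_block_def by (rule bexI[OF _ ABM]) (use in123 in simp)
    ultimately show ?thesis unfolding M1_def sb_colp by simp
  qed
  have lh1': "2 \<le> length h1" using lh1 n4 by simp
  note d2 = drop_first[OF _ inpM1 lh1' sbM1]
  note d2' = drop_first_inP[OF inpM1 lh1' sbM1]
  have inpM2: "inP h2 M2" unfolding h2_def M2_def by (rule d2'(1))
  have lh2': "length h2 < ?n" unfolding h2_def using d2'(2) lh1 n4 by simp
  have inpP3: "inP w3 P3" unfolding w3_def P3_def by (rule pair_props(1)[OF inph Ar Br AB])
  have lw3: "length w3 < ?n"
  proof -
    have l: "length w3 = card (A \<union> B)" unfolding w3_def by (rule pair_props(2)[OF inph Ar Br AB])
    have Csub: "C \<subseteq> {1..Suc ?n}" using inph Cr inP_sub lh by fastforce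
    have ABsub: "A \<union> B \<subseteq> {1..Suc ?n} - C"
    proof -
      have "A \<union> B \<subseteq> {1..Suc ?n}" using inph Ar Br inP_sub lh by fastforce
      moreover have "(A \<union> B) \<inter> C = {}" using inP_disj[OF inph] Ar Br Cr AC BC by blast
      ultimately show ?thesis by blast
    qed
    have c2: "card C \<ge> 2"
    proof -
      have "z \<in> Z \<inter> {4..}" using z4 by simp
      then have "up 3 z \<in> C" unfolding C_def by blast
      moreover have "up 3 z \<noteq> 4" using z4 unfolding up_def by simp
      moreover have "4 \<in> C" unfolding C_def by simp
      moreover note finC
      ultimately have "{4, up 3 z} \<subseteq> C" "card {4, up 3 z} = 2" "finite C" by auto
      then show ?thesis by (metis card_mono)
    qed
    have "card (A \<union> B) \<le> card ({1..Suc ?n} - C)" by (rule card_mono) (use ABsub in auto)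
    also have "\<dots> = Suc ?n - card C" using Csub by (simp add: card_Diff_subset finite_subset)
    finally show ?thesis using l c2 n4 by simp
  qed
  show ?thesis
  proof (intro exI conjI allI impI)
    show "inP h2 M2" by (rule inpM2)
    show "length h2 < ?n" by (rule lh2')
    show "inP w3 P3" by (rule inpP3)
    show "length w3 < ?n" by (rule lw3)
    fix \<alpha> :: "'a list \<Rightarrow> nat set set \<Rightarrow> complex"
    assume adm: "admissible \<alpha>"
    have "\<alpha> f {W, Z} = \<alpha> g {W, Z}"
      by (rule adm_v[OF adm inp]) (auto simp: g_def face_def)
    also have "\<dots> = \<alpha> h \<sigma>" using removal[OF adm inps p3 f34 sb34] rmvh colsig by simp
    also have "\<dots> = \<alpha> h \<rho>"
    proof -
      have "\<alpha> h \<rho> = \<alpha> h \<sigma> * \<alpha> (std_word h (B \<union> C)) (std_part (B \<union> C) {B, C})"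
        unfolding \<sigma>_def by (rule adm_merge[OF adm inph Br Cr BC b3 c4 f34])
      then show ?thesis using ps[OF adm] by simp
    qed
    also have "\<dots> = \<alpha> h M * \<alpha> w3 P3" by (rule mg1[OF adm])
    also have "\<alpha> h M = \<alpha> h1 M1" unfolding h1_def M1_def by (rule d1(1)[OF adm])
    also have "\<alpha> h1 M1 = \<alpha> h2 M2" unfolding h2_def M2_def by (rule d2(1)[OF adm])
    finally show "\<alpha> f {W, Z} = \<alpha> h2 M2 * \<alpha> w3 P3" .
  qed
qed


lemma card1_part:
  assumes inp: "inP f \<pi>" and c: "card \<pi> = 1"
  shows "\<pi> = {{1..length f}}"
proof -
  obtain B where B: "\<pi> = {B}" using c card_1_singletonE by blast
  have "\<Union>\<pi> = {1..length f}" using inp unfolding inP_def partition_on_def by simp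
  then show ?thesis using B by simp
qed

lemma card_pos_inP: "inP f \<pi> \<Longrightarrow> card \<pi> \<ge> 1"
proof -
  assume inp: "inP f \<pi>"
  have "1 \<in> {1..length f}" using inp unfolding inP_def by simp
  then obtain B where "B \<in> \<pi>" using inP_cover[OF inp] by blast
  then show ?thesis using inP_finite[OF inp] by (metis One_nat_def Suc_leI card_gt_0_iff empty_iff)
qed

lemma third_block_short:
  assumes inp: "inP f \<pi>" and b: "b1 \<in> \<pi>" "b2 \<in> \<pi>" "b3 \<in> \<pi>" "b3 \<noteq> b1" "b3 \<noteq> b2"
  shows "card (b1 \<union> b2) < length f"
proof -
  have ne: "b3 \<noteq> {}" using inP_ne[OF inp] b by auto
  have d: "(b1 \<union> b2) \<inter> b3 = {}" using inP_disj[OF inp] b by blast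
  have s: "b1 \<union> b2 \<subseteq> {1..length f}" "b3 \<subseteq> {1..length f}" using inP_sub[OF inp] b by auto
  then have "b1 \<union> b2 \<subset> {1..length f}" using ne d by blast
  then show ?thesis by (metis card_atLeastAtMost diff_Suc_1 finite_atLeastAtMost psubset_card_mono)
qed

lemma main_ind:
  assumes adm1: "admissible \<alpha>" and adm2: "admissible \<beta>"
    and H: "\<forall>f \<pi>. inP f \<pi> \<and> length f \<le> 4 \<and> card \<pi> = 2 \<longrightarrow> \<alpha> f \<pi> = \<beta> f \<pi>"
  shows "inP f \<pi> \<Longrightarrow> \<alpha> f \<pi> = \<beta> f \<pi>"
proof (induction "length f" arbitrary: f \<pi> rule: less_induct)
  case less
  let ?n = "length f"
  have IH: "\<And>g \<sigma>. length g < ?n \<Longrightarrow> inP g \<sigma> \<Longrightarrow> \<alpha> g \<sigma> = \<beta> g \<sigma>" using less.hyps by blast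
  have inner: "\<And>w \<sigma>. length w = ?n \<Longrightarrow> card \<sigma> = k \<Longrightarrow> inP w \<sigma> \<Longrightarrow> \<alpha> w \<sigma> = \<beta> w \<sigma>" for k
  proof (induction k rule: less_induct)
    case (less k w \<sigma>)
    have IH2: "\<And>w' \<sigma>'. length w' = ?n \<Longrightarrow> card \<sigma>' < k \<Longrightarrow> inP w' \<sigma>' \<Longrightarrow> \<alpha> w' \<sigma>' = \<beta> w' \<sigma>'"
      using less.IH by blast
    have lw: "length w = ?n" and ck: "card \<sigma> = k" and inp: "inP w \<sigma>" using less.prems by auto
    show ?case
    proof (cases "card \<sigma> = 1")
      case True
      then have "\<sigma> = {{1..length w}}" by (rule card1_part[OF inp])
      moreover have "length w \<ge> 1" using inp unfolding inP_def by simp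
      ultimately show ?thesis using adm_one[OF adm1] adm_one[OF adm2] by simp
    next
      case False
      then have c2: "card \<sigma> \<ge> 2" using card_pos_inP[OF inp] by simp
      have "2 \<le> length w"
      proof (rule ccontr)
        assume "\<not> 2 \<le> length w"
        then have "length w = 1" using inp unfolding inP_def by simp
        then have "\<Union>\<sigma> = {1}" using inp unfolding inP_def partition_on_def by simp
        then have "\<sigma> \<subseteq> {{1}, {}}"
        proof -
          assume u: "\<Union>\<sigma> = {1}"
          show ?thesis
          proof
            fix x assume "x \<in> \<sigma>"
            then have "x \<subseteq> {1}" using u by blast
            then have "x = {} \<or> x = {1}" by (simp add: subset_singleton_iff)
            then show "x \<in> {{1}, {}}" by blast
          qed
        qed
        moreover have "{} \<notin> \<sigma>" using inP_ne[OF inp] .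
        ultimately have "\<sigma> \<subseteq> {{1}}" by auto
        then have "card \<sigma> \<le> 1" by (metis card.empty card_mono finite.emptyI finite.insertI is_singleton_altdef is_singleton_def)
        then show False using c2 by simp
      qed
      then have n2: "2 \<le> length w" .
      show ?thesis
      proof (cases "same_block \<sigma> 1 2")
        case True
        note df = drop_first[OF adm1 inp n2 True] drop_first[OF adm2 inp n2 True]
        have "\<alpha> (rmv (w[0 := w!1]) 1) (colp 1 \<sigma>) = \<beta> (rmv (w[0 := w!1]) 1) (colp 1 \<sigma>)"
          by (rule IH) (use df lw n2 in auto)
        then show ?thesis using df by simp
      next
        case nsb12: False
        have one: "1 \<in> {1..length w}" "2 \<in> {1..length w}" using n2 by auto
        obtain X where X: "X \<in> \<sigma>" "1 \<in> X" using inP_cover[OF inp one(1)] by blast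
        obtain Y where Y: "Y \<in> \<sigma>" "2 \<in> Y" using inP_cover[OF inp one(2)] by blast
        have XY: "X \<noteq> Y" using nsb12 X Y unfolding same_block_def by blast
        show ?thesis
        proof (cases "card \<sigma> = 2")
          case c2: False
          then have c3: "card \<sigma> \<ge> 3" using \<open>card \<sigma> \<ge> 2\<close> by simp
          obtain b3 where b3: "b3 \<in> \<sigma>" "b3 \<noteq> X" "b3 \<noteq> Y"
          proof -
            have "\<not> \<sigma> \<subseteq> {X, Y}"
            proof
              assume "\<sigma> \<subseteq> {X, Y}"
              then have "card \<sigma> \<le> card {X, Y}" by (simp add: card_mono)
              also have "\<dots> \<le> 2" by (simp add: card_insert_le_m1)
              finally show False using c3 by simp
            qed
            then show ?thesis using that by blast
          qed
          define g where "g = w[0 := w!1]"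
          have lg: "length g = length w" unfolding g_def by simp
          have inpg: "inP g \<sigma>" using inP_len[OF lg] inp by simp
          have fg: "face g 1 = face g (Suc 1)" unfolding g_def face_def using n2 by (cases w) auto
          have Y': "Suc 1 \<in> Y" using Y by (simp add: numeral_2_eq_2)
          have vv: "\<gamma> w \<sigma> = \<gamma> g \<sigma>" if "admissible \<gamma>" for \<gamma>
            by (rule adm_v[OF that inp lg]) (auto simp: g_def face_def)
          have mm: "\<gamma> g \<sigma> = \<gamma> g (merge \<sigma> X Y) * \<gamma> (std_word g (X \<union> Y)) (std_part (X \<union> Y) {X, Y})"
            if "admissible \<gamma>" for \<gamma>
            by (rule adm_merge[OF that inpg X(1) Y(1) XY X(2) Y' fg])
          have e1: "\<alpha> g (merge \<sigma> X Y) = \<beta> g (merge \<sigma> X Y)"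
          proof (rule IH2)
            show "length g = ?n" using lg lw by simp
            show "card (merge \<sigma> X Y) < k" using merge_props(2)[OF inpg X(1) Y(1) XY] ck c3 by simp
            show "inP g (merge \<sigma> X Y)" by (rule merge_props(1)[OF inpg X(1) Y(1) XY])
          qed
          have e2: "\<alpha> (std_word g (X \<union> Y)) (std_part (X \<union> Y) {X, Y}) = \<beta> (std_word g (X \<union> Y)) (std_part (X \<union> Y) {X, Y})"
          proof (rule IH)
            show "length (std_word g (X \<union> Y)) < ?n"
              using pair_props(2)[OF inpg X(1) Y(1) XY] third_block_short[OF inpg X(1) Y(1) b3] lg lw by simp
            show "inP (std_word g (X \<union> Y)) (std_part (X \<union> Y) {X, Y})" by (rule pair_props(1)[OF inpg X(1) Y(1) XY])
          qed
          show ?thesis using vv[OF adm1] vv[OF adm2] mm[OF adm1] mm[OF adm2] e1 e2 by simp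
        next
          case c2: True
          have pXY: "\<sigma> = {X, Y}"
          proof -
            have s1: "{X, Y} \<subseteq> \<sigma>" using X Y by simp
            have s2: "card {X, Y} = card \<sigma>" using XY c2 by simp
            show ?thesis using card_subset_eq[OF inP_finite[OF inp] s1 s2] by simp
          qed
          show ?thesis
          proof (cases "length w \<le> 4")
            case True
            then show ?thesis using H inp c2 by blast
          next
            case False
            then have n5: "length w \<ge> 5" by simp
            show ?thesis
            proof (cases "same_block \<sigma> (length w - 1) (length w)")
              case True
              note dl = drop_last[OF adm1 inp n2 True] drop_last[OF adm2 inp n2 True]
              let ?w = "rmv (w[length w - 1 := w!(length w - 2)]) (length w - 1)"
              have "\<alpha> ?w (colp (length w - 1) \<sigma>) = \<beta> ?w (colp (length w - 1) \<sigma>)"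
                by (rule IH) (use dl lw n2 in auto)
              then show ?thesis using dl by simp
            next
              case nsbn: False
              have three: "3 \<in> {1..length w}" using n5 by simp
              obtain Z where Z: "Z \<in> \<sigma>" "3 \<in> Z" using inP_cover[OF inp three] by blast
              define W where "W = (if Z = X then Y else X)"
              have ZXY: "Z = X \<or> Z = Y" using Z pXY by blast
              have pWZ: "\<sigma> = {W, Z}" using ZXY pXY XY unfolding W_def by auto
              have WZ: "W \<noteq> Z" using ZXY XY unfolding W_def by auto
              have o12: "(1 \<in> W \<and> 2 \<in> Z) \<or> (1 \<in> Z \<and> 2 \<in> W)" using ZXY X Y XY unfolding W_def by auto
              obtain z where z: "z \<in> Z" "3 < z"
              proof -
                have nn: "length w - 1 \<in> {1..length w}" "length w \<in> {1..length w}" using n5 by auto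
                obtain B1 where B1: "B1 \<in> \<sigma>" "length w - 1 \<in> B1" using inP_cover[OF inp nn(1)] by blast
                obtain B2 where B2: "B2 \<in> \<sigma>" "length w \<in> B2" using inP_cover[OF inp nn(2)] by blast
                have "B1 \<noteq> B2" using nsbn B1 B2 unfolding same_block_def by blast
                then have "B1 = Z \<or> B2 = Z" using B1(1) B2(1) pWZ by blast
                then show ?thesis
                proof
                  assume "B1 = Z" then show ?thesis using that[of "length w - 1"] B1 n5 by simp
                next
                  assume "B2 = Z" then show ?thesis using that[of "length w"] B2 n5 by simp
                qed
              qed
              have inpWZ: "inP w {W, Z}" using inp pWZ by simp
              obtain w1 M1 w2 M2 where T: "inP w1 M1" "length w1 < length w" "inP w2 M2" "length w2 < length w"
                "\<forall>\<gamma>. admissible \<gamma> \<longrightarrow> \<gamma> w {W, Z} = \<gamma> w1 M1 * \<gamma> w2 M2"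
                using two_step[OF inpWZ WZ Z(2) z o12] by blast
              have "\<alpha> w1 M1 = \<beta> w1 M1" by (rule IH) (use T lw in auto)
              moreover have "\<alpha> w2 M2 = \<beta> w2 M2" by (rule IH) (use T lw in auto)
              moreover have "\<alpha> w {W, Z} = \<alpha> w1 M1 * \<alpha> w2 M2" using T(5) adm1 by blast
              moreover have "\<beta> w {W, Z} = \<beta> w1 M1 * \<beta> w2 M2" using T(5) adm2 by blast
              ultimately show ?thesis using pWZ by simp
            qed
          qed
        qed
      qed
    qed
  qed
  show ?case using inner[OF refl refl less.prems] .
qed

theorem corollary6p4:
  fixes \<alpha> \<beta> :: "'f::finite list \<Rightarrow> nat set set \<Rightarrow> complex"
  assumes "admissible \<alpha>" and "admissible \<beta>"
  shows "(\<forall>f \<pi>. inP f \<pi> \<longrightarrow> \<alpha> f \<pi> = \<beta> f \<pi>) \<longleftrightarrow>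
         (\<forall>f \<pi>. inP f \<pi> \<and> length f \<le> 4 \<and> card \<pi> = 2 \<longrightarrow> \<alpha> f \<pi> = \<beta> f \<pi>)"
proof
  assume "\<forall>f \<pi>. inP f \<pi> \<longrightarrow> \<alpha> f \<pi> = \<beta> f \<pi>"
  then show "\<forall>f \<pi>. inP f \<pi> \<and> length f \<le> 4 \<and> card \<pi> = 2 \<longrightarrow> \<alpha> f \<pi> = \<beta> f \<pi>" by blast
next
  assume H: "\<forall>f \<pi>. inP f \<pi> \<and> length f \<le> 4 \<and> card \<pi> = 2 \<longrightarrow> \<alpha> f \<pi> = \<beta> f \<pi>"
  show "\<forall>f \<pi>. inP f \<pi> \<longrightarrow> \<alpha> f \<pi> = \<beta> f \<pi>"
    using main_ind[OF assms H] by blast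
qed

end
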